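(* Let $r\in\mathbb{N}_0$, $s\in\mathbb{N}$, and let $I,J$ be finite sets with $|I|=r$, $|J|=r+s$. Let $n\in\mathbb{N}$ (so $n\ge1$) and $A=(a_{i,j})\in\mathbb{N}_0^{I\times J}$ with $\sum_{j\in J}a_{i,j}\le n$ for all $i\in I$, and suppose exactly $u$ rows of $A$ have exactly one non-zero entry. Then $$\min\{\|\mathbf{v}\|_\infty\mid \mathbf{0}\neq\mathbf{v}\in\ker(A)\cap\mathbb{Z}^J\}\ \le\ \left\lfloor n^{\frac{r-u}{s}}\right\rfloor,$$ where $\ker(A)$ is the kernel of the linear map $\mathbb{Q}^J\to\mathbb{Q}^I$ given by $A$ and $\|\mathbf{v}\|_\infty=\max_j|v_j|$ (in particular, the set on the left is non-empty). *)

theory Defs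
  imports Complex_Main
begin

end

theory Submission
  imports Defs "HOL-Library.FuncSet"
begin

lemma key_ineq:
  fixes n s e B :: nat and p :: real
  assumes "n \<ge> 1" "s \<ge> 1" "p = real n powr (real e / real s)" "B = nat \<lfloor>p\<rfloor>"
  shows "n ^ e < (B+1) ^ s"
proof -
  have p0: "p \<ge> 0" using assms by simp
  have "p < real B + 1" using assms p0 by linarith
  hence "p ^ s < (real B + 1) ^ s" using p0 assms(2) by (intro power_strict_mono) auto
  moreover have "p ^ s = real n ^ e"
  proof -
    have "p ^ s = real n powr (real e / real s * real s)"
      using assms by (simp add: powr_realpow[symmetric] powr_powr)
    also have "\<dots> = real n powr real e" using assms by simp
    also have "\<dots> = real n ^ e" using assms by (simp add: powr_realpow)
    finally show ?thesis .
  qed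
  ultimately have "real (n ^ e) < real ((B+1)^s)" by (simp add: add.commute)
  thus ?thesis by linarith
qed

theorem lemma5p2:
  fixes I :: "'i set" and J :: "'j set" and A :: "'i \<Rightarrow> 'j \<Rightarrow> nat"
    and r s n u :: nat
  assumes "finite I" and "finite J"
    and "card I = r" and "card J = r + s" and "s \<ge> 1" and "n \<ge> 1"
    and "\<forall>i\<in>I. (\<Sum>j\<in>J. A i j) \<le> n"
    and "u = card {i \<in> I. card {j \<in> J. A i j \<noteq> 0} = 1}"
  defines "K \<equiv> {v :: 'j \<Rightarrow> int. (\<forall>j. j \<notin> J \<longrightarrow> v j = 0) \<and> (\<exists>j\<in>J. v j \<noteq> 0)
                 \<and> (\<forall>i\<in>I. (\<Sum>j\<in>J. of_nat (A i j) * of_int (v j)) = (0::rat))}"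
  shows "K \<noteq> {} \<and>
         Inf ((\<lambda>v. Max ((\<lambda>j. \<bar>v j\<bar>) ` J)) ` K)
           \<le> \<lfloor>real n powr ((real r - real u) / real s)\<rfloor>"
proof -
  define U where "U = {i \<in> I. card {j \<in> J. A i j \<noteq> 0} = 1}"
  define I' where "I' = I - U"
  define J0 where "J0 = (\<Union>i\<in>U. {j \<in> J. A i j \<noteq> 0})"
  define J' where "J' = J - J0"
  define p where "p = real n powr (real (r - u) / real s)"
  define B where "B = nat \<lfloor>p\<rfloor>"
  have UI: "U \<subseteq> I" unfolding U_def by auto
  have fU: "finite U" using UI assms(1) finite_subset by blast
  have ur: "u \<le> r" using assms UI card_mono U_def by metis
  have cI': "card I' = r - u" unfolding I'_def using card_Diff_subset[OF fU UI] assms U_def by simp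
  have J0J: "J0 \<subseteq> J" unfolding J0_def by auto
  have fJ0: "finite J0" using J0J assms(2) finite_subset by blast
  have "card J0 \<le> (\<Sum>i\<in>U. card {j \<in> J. A i j \<noteq> 0})"
    unfolding J0_def by (rule card_UN_le[OF fU])
  also have "\<dots> = (\<Sum>i\<in>U. 1)" by (rule sum.cong) (auto simp: U_def)
  also have "\<dots> = u" using assms U_def by simp
  finally have cJ0: "card J0 \<le> u" .
  have cJ': "card J' \<ge> r + s - u" unfolding J'_def
    using card_Diff_subset[OF fJ0 J0J] assms cJ0 by simp
  have fJ': "finite J'" using assms(2) J'_def by simp
  have fI': "finite I'" using assms(1) I'_def by simp
  have pB: "real_of_int (int B) \<le> p" and B0: "int B = \<lfloor>p\<rfloor>" unfolding B_def p_def by auto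
  have hineq: "n ^ (r - u) < (B+1) ^ s" by (rule key_ineq[OF assms(6) assms(5) p_def B_def])
  define X where "X = PiE J' (\<lambda>_. {0..int B})"
  define Y where "Y = PiE I' (\<lambda>_. {0..int (n*B)})"
  define f where "f = (\<lambda>x. \<lambda>i\<in>I'. \<Sum>j\<in>J'. int (A i j) * x j)"
  have cX: "card X = (B+1) ^ card J'" unfolding X_def by (simp add: card_PiE fJ' nat_add_distrib)
  have cY: "card Y = (n*B+1) ^ (r - u)" unfolding Y_def by (simp add: card_PiE fI' cI' nat_add_distrib nat_mult_distrib)
  have fY: "finite Y" unfolding Y_def using fI' by (simp add: finite_PiE)
  have "card Y \<le> (n*(B+1)) ^ (r-u)" unfolding cY
    by (rule power_mono) (use assms(6) in auto)
  also have "\<dots> = n^(r-u) * (B+1)^(r-u)" by (rule power_mult_distrib)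
  also have "\<dots> < (B+1)^s * (B+1)^(r-u)" using hineq by simp
  also have "\<dots> = (B+1)^(r+s-u)" using ur by (simp add: power_add[symmetric] add.commute)
  also have "\<dots> \<le> card X" unfolding cX by (rule power_increasing[OF cJ']) simp
  finally have YX: "card Y < card X" .
  have fXY: "f ` X \<subseteq> Y"
  proof
    fix z assume "z \<in> f ` X"
    then obtain x where x: "x \<in> X" "z = f x" by auto
    show "z \<in> Y" unfolding Y_def
    proof (rule PiE_I)
      fix i assume i: "i \<in> I'"
      have xr: "\<And>j. j \<in> J' \<Longrightarrow> 0 \<le> x j \<and> x j \<le> int B" using x(1) unfolding X_def by auto
      have "z i = (\<Sum>j\<in>J'. int (A i j) * x j)" using x i f_def by simp
      moreover have "(\<Sum>j\<in>J'. int (A i j) * x j) \<ge> 0" using xr by (intro sum_nonneg) auto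
      moreover have "(\<Sum>j\<in>J'. int (A i j) * x j) \<le> (\<Sum>j\<in>J'. int (A i j) * int B)"
        using xr by (intro sum_mono mult_left_mono) auto
      moreover have "(\<Sum>j\<in>J'. int (A i j) * int B) \<le> (\<Sum>j\<in>J. int (A i j) * int B)"
        using assms(2) J'_def by (intro sum_mono2) auto
      moreover have "(\<Sum>j\<in>J. int (A i j) * int B) = int (\<Sum>j\<in>J. A i j) * int B"
        by (simp add: sum_distrib_right)
      moreover have "int (\<Sum>j\<in>J. A i j) * int B \<le> int n * int B"
        using assms(7) i I'_def by (intro mult_right_mono) (auto simp flip: of_nat_sum)
      ultimately show "z i \<in> {0..int (n*B)}" by simp
    next
      fix i assume "i \<notin> I'" thus "z i = undefined" using x f_def by simp
    qed
  qed
  have "\<not> inj_on f X"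
  proof
    assume "inj_on f X"
    hence "card X \<le> card Y" using card_inj_on_le fXY fY by blast
    thus False using YX by simp
  qed
  then obtain x y where xy: "x \<in> X" "y \<in> X" "x \<noteq> y" "f x = f y" unfolding inj_on_def by auto
  define v where "v = (\<lambda>j. if j \<in> J' then x j - y j else 0)"
  have xr: "\<And>j. j \<in> J' \<Longrightarrow> 0 \<le> x j \<and> x j \<le> int B" using xy(1) unfolding X_def by auto
  have yr: "\<And>j. j \<in> J' \<Longrightarrow> 0 \<le> y j \<and> y j \<le> int B" using xy(2) unfolding X_def by auto
  obtain j0 where j0: "x j0 \<noteq> y j0" using xy(3) by auto
  have j0J': "j0 \<in> J'"
  proof (rule ccontr)
    assume "j0 \<notin> J'"
    hence "x j0 = undefined" "y j0 = undefined" using xy unfolding X_def by auto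
    thus False using j0 by simp
  qed
  have vK: "v \<in> K"
  proof -
    have A1: "\<forall>j. j \<notin> J \<longrightarrow> v j = 0" unfolding v_def J'_def by auto
    have A2: "\<exists>j\<in>J. v j \<noteq> 0" using j0 j0J' J'_def v_def by (intro bexI[of _ j0]) auto
    have A3: "(\<Sum>j\<in>J. of_nat (A i j) * of_int (v j)) = (0::rat)" if i: "i \<in> I" for i
    proof -
      have "(\<Sum>j\<in>J. of_nat (A i j) * of_int (v j)) = (of_int (\<Sum>j\<in>J. int (A i j) * v j) :: rat)"
        by simp
      moreover have "(\<Sum>j\<in>J. int (A i j) * v j) = 0"
      proof (cases "i \<in> U")
        case True
        have "int (A i j) * v j = 0" if "j \<in> J" for j
        proof (cases "A i j = 0")
          case False
          hence "j \<in> J0" unfolding J0_def using True that by auto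
          thus ?thesis by (simp add: v_def J'_def)
        qed simp
        thus ?thesis by (intro sum.neutral) simp
      next
        case False
        hence iI': "i \<in> I'" using i I'_def by simp
        have "(\<Sum>j\<in>J. int (A i j) * v j) = (\<Sum>j\<in>J'. int (A i j) * v j)"
          using assms(2) J'_def by (intro sum.mono_neutral_right) (auto simp: v_def)
        also have "\<dots> = (\<Sum>j\<in>J'. int (A i j) * x j) - (\<Sum>j\<in>J'. int (A i j) * y j)"
          by (simp add: v_def sum_subtractf[symmetric] algebra_simps)
        also have "\<dots> = f x i - f y i" using iI' f_def by simp
        finally show ?thesis using xy(4) by simp
      qed
      ultimately show ?thesis by simp
    qed
    show ?thesis unfolding K_def using A1 A2 A3 by blast
  qed
  have Jne: "J \<noteq> {}" using assms(4) assms(5) by auto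
  have Mv: "Max ((\<lambda>j. \<bar>v j\<bar>) ` J) \<le> int B"
  proof -
    have "\<And>j. j \<in> J' \<Longrightarrow> \<bar>x j - y j\<bar> \<le> int B"
    proof -
      fix j assume "j \<in> J'" from xr[OF this] yr[OF this] show "\<bar>x j - y j\<bar> \<le> int B" by linarith
    qed
    thus ?thesis using assms(2) Jne by (auto simp: Max_le_iff v_def)
  qed
  have bdd: "bdd_below ((\<lambda>v. Max ((\<lambda>j. \<bar>v j\<bar>) ` J)) ` K)"
  proof (rule bdd_belowI[of _ 0])
    fix m assume "m \<in> (\<lambda>v. Max ((\<lambda>j. \<bar>v j\<bar>) ` J)) ` K"
    then obtain w where "m = Max ((\<lambda>j. \<bar>w j\<bar>) ` J)" by auto
    moreover obtain j where "j \<in> J" using Jne by auto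
    ultimately show "0 \<le> m"
    proof -
      have "\<bar>w j\<bar> \<le> Max ((\<lambda>j. \<bar>w j\<bar>) ` J)" using assms(2) \<open>j \<in> J\<close> by (intro Max_ge) auto
      thus ?thesis using \<open>m = _\<close> by linarith
    qed
  qed
  have "Inf ((\<lambda>v. Max ((\<lambda>j. \<bar>v j\<bar>) ` J)) ` K) \<le> Max ((\<lambda>j. \<bar>v j\<bar>) ` J)"
    by (rule cInf_lower[OF imageI[OF vK] bdd])
  also have "\<dots> \<le> \<lfloor>p\<rfloor>" using Mv B0 by simp
  finally have "Inf ((\<lambda>v. Max ((\<lambda>j. \<bar>v j\<bar>) ` J)) ` K) \<le> \<lfloor>p\<rfloor>" .
  moreover have "real (r - u) = real r - real u" using ur by simp
  moreover have "K \<noteq> {}" using vK by blast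
  ultimately show ?thesis unfolding p_def by simp
qed

end
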